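(* Let $m\ge2$, $n\ge1$, $f_i:\mathbb{R}^n\to\mathbb{R}$ smooth, each with $L^g_{f_i}$-Lipschitz gradient and $L^H_{f_i}$-Lipschitz Hessian, and let the perturbations $\mathbf{n}^k\in\mathbb{R}^{mn}$ be independent over $k$ with $\mathbf{n}^k\sim\mathcal{N}(\mathbf{0},\sigma^2\mathbf{I}_{mn})$, $\sigma>0$. Fix $\boldsymbol\theta^0\in\mathbb{R}^{mn}$ and let $\Psi_{\boldsymbol\theta^0}(\mathbf{x})=F(\boldsymbol\theta^0+\sqrt{\hat{\mathbf{L}}}\mathbf{x})$. Given $\rho\ge1$, let $\alpha=\frac{1}{L^g_\Psi\rho^7}$ and $d=\frac{\sigma}{20L^H_\Psi\rho^2}$. Then for any $\mathbf{x}^0\in\mathbb{R}^{mn}$ and any $t_0,t\ge0$, the iterates $\mathbf{x}^{k+1}=\mathbf{x}^k-\alpha(\nabla\Psi_{\boldsymbol\theta^0}(\mathbf{x}^k)+\mathbf{n}^k)$ satisfy $$\mathbb{P}\Big[\Psi_{\boldsymbol\theta^0}(\mathbf{x}^{t_0+t})-\Psi_{\boldsymbol\theta^0}(\mathbf{x}^{t_0})\le-\frac{\alpha}{2}\sum_{k=0}^{t-1}\|\nabla\Psi_{\boldsymbol\theta^0}(\mathbf{x}^{t_0+k})\|^2+mn\alpha\sigma^2(t+\sqrt{t\rho}+\rho)\Big]\ge1-2e^{-\rho}.$$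
   Context: $F(\boldsymbol\theta)=\sum_{i=1}^mf_i(\boldsymbol\theta_i)$ for $\boldsymbol\theta=[\boldsymbol\theta_1^\top,\dots,\boldsymbol\theta_m^\top]^\top$. $\mathbf{L}$ is the Laplacian of an undirected graph on $\{1,\dots,m\}$, $\sqrt{\mathbf{L}}$ its unique symmetric positive semidefinite square root, $\sqrt{\hat{\mathbf{L}}}=\sqrt{\mathbf{L}}\otimes\mathbf{I}_n$. $L^g_\Psi=\|\sqrt{\mathbf{L}}\|^2\max_iL^g_{f_i}$ and $L^H_\Psi=\|\sqrt{\mathbf{L}}\|^3\max_iL^H_{f_i}$ (spectral norm). *)

theory Defs
  imports "HOL-Analysis.Analysis" "HOL-Probability.Probability"
begin

definition grad :: "('a::real_inner \<Rightarrow> real) \<Rightarrow> 'a \<Rightarrow> 'a" where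
  "grad f x = (THE D. GDERIV f x :> D)"

fun iter_dd :: "'a::real_normed_vector list \<Rightarrow> ('a \<Rightarrow> real) \<Rightarrow> 'a \<Rightarrow> real" where
  "iter_dd [] f = f"
| "iter_dd (v # vs) f = (\<lambda>x. frechet_derivative (iter_dd vs f) (at x) v)"

definition smooth_fun :: "('a::real_normed_vector \<Rightarrow> real) \<Rightarrow> bool" where
  "smooth_fun f \<longleftrightarrow> (\<forall>vs x. iter_dd vs f differentiable (at x))"

definition laplacian :: "('m::finite \<Rightarrow> 'm \<Rightarrow> bool) \<Rightarrow> real^'m^'m" where
  "laplacian E = (\<chi> i j. if i = j then real (card {k. E i k}) else if E i j then -1 else 0)"

definition psd_sqrt :: "real^'m::finite^'m \<Rightarrow> real^'m^'m" where
  "psd_sqrt A = (THE S. transpose S = S \<and> (\<forall>v. 0 \<le> v \<bullet> (S *v v)) \<and> S ** S = A)"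

text \<open>Action of the Kronecker product S \<otimes> I_n on a stacked vector x = [x_1;...;x_m], x_i \<in> R^n.\<close>
definition kron_id_apply :: "real^'m::finite^'m \<Rightarrow> real^'n^'m \<Rightarrow> real^'n^'m" where
  "kron_id_apply S x = (\<chi> i. \<Sum>j\<in>UNIV. S $ i $ j *\<^sub>R x $ j)"

definition Fsum :: "('m::finite \<Rightarrow> real^'n \<Rightarrow> real) \<Rightarrow> real^'n^'m \<Rightarrow> real" where
  "Fsum f \<theta> = (\<Sum>i\<in>UNIV. f i (\<theta> $ i))"

definition Psi :: "('m::finite \<Rightarrow> real^'n \<Rightarrow> real) \<Rightarrow> ('m \<Rightarrow> 'm \<Rightarrow> bool) \<Rightarrow> real^'n^'m
    \<Rightarrow> real^'n^'m \<Rightarrow> real" where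
  "Psi f E \<theta>0 x = Fsum f (\<theta>0 + kron_id_apply (psd_sqrt (laplacian E)) x)"

primrec gd_iter :: "('a::real_vector \<Rightarrow> 'a) \<Rightarrow> real \<Rightarrow> 'a \<Rightarrow> (nat \<Rightarrow> 'w \<Rightarrow> 'a) \<Rightarrow> 'w \<Rightarrow> nat \<Rightarrow> 'a" where
  "gd_iter g \<alpha> x0 N \<omega> 0 = x0"
| "gd_iter g \<alpha> x0 N \<omega> (Suc k) =
     gd_iter g \<alpha> x0 N \<omega> k - \<alpha> *\<^sub>R (g (gd_iter g \<alpha> x0 N \<omega> k) + N k \<omega>)"

end

theory Submission
  imports Defs
begin

lemma linear_rep_inner:
  fixes f' :: "'a::euclidean_space \<Rightarrow> real"
  assumes "linear f'"
  shows "f' h = inner h (\<Sum>b\<in>Basis. f' b *\<^sub>R b)"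
proof -
  have "f' h = f' (\<Sum>b\<in>Basis. (h \<bullet> b) *\<^sub>R b)" by (simp add: euclidean_representation)
  also have "\<dots> = (\<Sum>b\<in>Basis. (h \<bullet> b) * f' b)"
    using assms by (simp add: linear_sum linear_scale)
  also have "\<dots> = inner h (\<Sum>b\<in>Basis. f' b *\<^sub>R b)"
    by (simp add: inner_sum_right mult.commute)
  finally show ?thesis .
qed

lemma grad_unique:
  fixes f :: "'a::real_inner \<Rightarrow> real"
  assumes "GDERIV f x :> D"
  shows "grad f x = D"
proof -
  have "\<And>D'. GDERIV f x :> D' \<Longrightarrow> D' = D"
  proof -
    fix D' assume "GDERIV f x :> D'"
    then have "(\<lambda>h. inner h D') = (\<lambda>h. inner h D)"
      using assms unfolding gderiv_def by (rule has_derivative_unique)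
    then have "inner (D' - D) D' = inner (D' - D) D" by meson
    then have "inner (D' - D) (D' - D) = 0" by (simp add: inner_diff_right)
    then show "D' = D" by simp
  qed
  then show ?thesis unfolding grad_def using assms by (rule the_equality[rotated])
qed

lemma gderiv_grad:
  fixes f :: "'a::euclidean_space \<Rightarrow> real"
  assumes "f differentiable (at x)"
  shows "GDERIV f x :> grad f x"
proof -
  obtain f' where d: "(f has_derivative f') (at x)" using assms unfolding differentiable_def by blast
  then have lin: "linear f'" using has_derivative_linear by blast
  define D where "D = (\<Sum>b\<in>Basis. f' b *\<^sub>R b)"
  have "f' = (\<lambda>h. inner h D)" 
  proof
    fix h show "f' h = inner h D" unfolding D_def by (rule linear_rep_inner[OF lin])
  qed
  with d have g: "GDERIV f x :> D" unfolding gderiv_def by simp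
  have "grad f x = D" by (rule grad_unique[OF g])
  then show ?thesis using g by simp
qed

lemma kron_apply: "kron_id_apply A x $ i $ l = (A *v (\<chi> j. x $ j $ l)) $ i"
  by (simp add: kron_id_apply_def matrix_vector_mult_def sum_component)

lemma norm2_vec_cols:
  fixes x :: "real^'n::finite^'m::finite"
  shows "(norm x)^2 = (\<Sum>l\<in>UNIV. (norm (\<chi> j. x $ j $ l))^2)"
proof -
  have "(norm x)^2 = inner x x" by (rule power2_norm_eq_inner)
  also have "\<dots> = (\<Sum>i\<in>UNIV. \<Sum>l\<in>UNIV. x$i$l * x$i$l)"
    by (simp add: inner_vec_def)
  also have "\<dots> = (\<Sum>l\<in>UNIV. \<Sum>i\<in>UNIV. x$i$l * x$i$l)" by (rule sum.swap)
  also have "\<dots> = (\<Sum>l\<in>UNIV. inner (\<chi> j. x $ j $ l) (\<chi> j. x $ j $ l))"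
    by (simp add: inner_vec_def)
  also have "\<dots> = (\<Sum>l\<in>UNIV. (norm (\<chi> j. x $ j $ l))^2)"
    by (simp only: power2_norm_eq_inner)
  finally show ?thesis .
qed

lemma kron_norm:
  fixes A :: "real^'m::finite^'m" and x :: "real^'n::finite^'m"
  shows "norm (kron_id_apply A x) \<le> onorm (\<lambda>v. A *v v) * norm x"
proof -
  let ?c = "\<lambda>l. (\<chi> j. x $ j $ l) :: real^'m"
  let ?K = "onorm (\<lambda>v. A *v v)"
  have K0: "0 \<le> ?K" by (rule onorm_pos_le) simp
  have cols: "(\<chi> j. kron_id_apply A x $ j $ l) = A *v ?c l" for l
    by (simp add: vec_eq_iff kron_apply)
  have "(norm (kron_id_apply A x))^2 = (\<Sum>l\<in>UNIV. (norm (A *v ?c l))^2)"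
    by (simp add: norm2_vec_cols[of "kron_id_apply A x"] cols)
  also have "\<dots> \<le> (\<Sum>l\<in>UNIV. (?K * norm (?c l))^2)"
    by (intro sum_mono power_mono onorm) auto
  also have "\<dots> = ?K^2 * (norm x)^2"
    by (simp add: norm2_vec_cols[of x] power_mult_distrib sum_distrib_left)
  also have "\<dots> = (?K * norm x)^2" by (simp add: power_mult_distrib)
  finally show ?thesis using K0 by (simp add: power2_le_iff_abs_le)
qed

lemma kron_diff: "kron_id_apply A (x - y) = kron_id_apply A x - kron_id_apply A y"
  by (simp add: kron_id_apply_def vec_eq_iff scaleR_diff_right sum_subtractf)

lemma kron_add: "kron_id_apply A (x + y) = kron_id_apply A x + kron_id_apply A y"
  by (simp add: kron_id_apply_def vec_eq_iff scaleR_add_right sum.distrib)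

lemma kron_scale: "kron_id_apply A (c *\<^sub>R x) = c *\<^sub>R kron_id_apply A x"
  by (simp add: kron_id_apply_def vec_eq_iff scaleR_sum_right mult_ac)

lemma kron_linear: "linear (kron_id_apply A)"
  by (rule linearI) (simp_all add: kron_add kron_scale)

lemma kron_adjoint:
  "inner (kron_id_apply A h) v = inner h (kron_id_apply (transpose A) v)"
proof -
  have "inner (kron_id_apply A h) v = (\<Sum>i\<in>UNIV. \<Sum>j\<in>UNIV. A$i$j * inner (h$j) (v$i))"
    apply (simp add: kron_id_apply_def inner_vec_def inner_sum_left sum_distrib_left sum_distrib_right)
    apply (rule sum.cong[OF refl])
    apply (subst sum.swap)
    apply (simp add: mult_ac)
    done
  also have "\<dots> = (\<Sum>j\<in>UNIV. \<Sum>i\<in>UNIV. A$i$j * inner (h$j) (v$i))" by (rule sum.swap)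
  also have "\<dots> = inner h (kron_id_apply (transpose A) v)"
    apply (simp add: kron_id_apply_def inner_vec_def inner_sum_right transpose_def sum_distrib_left sum_distrib_right)
    apply (rule sum.cong[OF refl])
    apply (subst sum.swap)
    apply (simp add: mult_ac)
    done
  finally show ?thesis .
qed

lemma mat_adjoint:
  fixes A :: "real^'m::finite^'m"
  shows "inner (A *v z) y = inner z (transpose A *v y)"
proof -
  have "inner (A *v z) y = (\<Sum>i\<in>UNIV. \<Sum>j\<in>UNIV. A$i$j * z$j * y$i)"
    by (simp add: matrix_vector_mult_def inner_vec_def sum_distrib_right)
  also have "\<dots> = (\<Sum>j\<in>UNIV. \<Sum>i\<in>UNIV. A$i$j * z$j * y$i)" by (rule sum.swap)
  also have "\<dots> = inner z (transpose A *v y)"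
    by (simp add: matrix_vector_mult_def inner_vec_def sum_distrib_left transpose_def mult_ac)
  finally show ?thesis .
qed

lemma onorm_transpose_le:
  fixes A :: "real^'m::finite^'m"
  shows "onorm (\<lambda>v. transpose A *v v) \<le> onorm (\<lambda>v. A *v v)"
proof (rule onorm_bound)
  let ?K = "onorm (\<lambda>v. A *v v)"
  show K0: "0 \<le> ?K" by (rule onorm_pos_le) simp
  fix y :: "real^'m"
  let ?z = "transpose A *v y"
  have "(norm ?z)^2 = inner (A *v ?z) y"
    by (simp add: power2_norm_eq_inner mat_adjoint)
  also have "\<dots> \<le> norm (A *v ?z) * norm y" by (rule norm_cauchy_schwarz)
  also have "\<dots> \<le> ?K * norm ?z * norm y"
    by (intro mult_right_mono onorm) auto
  finally have "norm ?z * norm ?z \<le> norm ?z * (?K * norm y)" by (simp add: power2_eq_square ac_simps)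
  then show "norm ?z \<le> ?K * norm y"
    using K0 by (cases "norm ?z = 0") (auto simp: mult_le_cancel_left)
qed

lemma descent:
  fixes F :: "'a::real_inner \<Rightarrow> real"
  assumes gd: "\<And>x. GDERIV F x :> G x"
    and lip: "\<And>x y. norm (G x - G y) \<le> L * norm (x - y)"
  shows "F y \<le> F x + inner (G x) (y - x) + L / 2 * (norm (y - x))^2"
proof -
  define h where "h = y - x"
  define \<phi> where "\<phi> s = F (x + s *\<^sub>R h) - s * inner (G x) h - L / 2 * s^2 * (norm h)^2" for s
  have dF: "((\<lambda>s. F (x + s *\<^sub>R h)) has_real_derivative inner h (G (x + s *\<^sub>R h))) (at s)" for s
  proof -
    have p: "((\<lambda>s. x + s *\<^sub>R h) has_derivative (\<lambda>s. s *\<^sub>R h)) (at s)"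
      by (auto intro!: derivative_eq_intros)
    have "((\<lambda>s. F (x + s *\<^sub>R h)) has_derivative (\<lambda>t. inner (t *\<^sub>R h) (G (x + s *\<^sub>R h)))) (at s)"
      using has_derivative_compose[OF p gd[of "x + s *\<^sub>R h", unfolded gderiv_def]] .
    moreover have "(\<lambda>t. inner (t *\<^sub>R h) (G (x + s *\<^sub>R h))) = (*) (inner h (G (x + s *\<^sub>R h)))"
      by (auto simp: fun_eq_iff)
    ultimately show ?thesis unfolding has_field_derivative_def by simp
  qed
  have d\<phi>: "(\<phi> has_real_derivative (inner h (G (x + s *\<^sub>R h)) - inner (G x) h - L * s * (norm h)^2)) (at s)" for s
    unfolding \<phi>_def[abs_def]
    by (rule derivative_eq_intros dF refl | simp)+
  have "\<phi> 1 \<le> \<phi> 0"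
  proof (rule DERIV_nonpos_imp_nonincreasing[of 0 1])
    fix s :: real assume s0: "0 \<le> s" and s1: "s \<le> 1"
    have "inner h (G (x + s *\<^sub>R h)) - inner (G x) h = inner (G (x + s *\<^sub>R h) - G x) h"
      by (simp add: inner_diff_left inner_diff_right inner_commute)
    also have "\<dots> \<le> norm (G (x + s *\<^sub>R h) - G x) * norm h" by (rule norm_cauchy_schwarz)
    also have "\<dots> \<le> L * norm (x + s *\<^sub>R h - x) * norm h" by (intro mult_right_mono lip) auto
    also have "\<dots> = L * s * (norm h)^2" using s0 by (simp add: power2_eq_square)
    finally show "\<exists>y. (\<phi> has_real_derivative y) (at s) \<and> y \<le> 0" using d\<phi>[of s] by auto
  qed simp
  then show ?thesis unfolding \<phi>_def h_def by (simp add: inner_commute)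
qed

lemma descent_step:
  fixes F :: "'a::real_inner \<Rightarrow> real"
  assumes gd: "\<And>x. GDERIV F x :> G x"
    and lip: "\<And>x y. norm (G x - G y) \<le> L * norm (x - y)"
    and a0: "0 \<le> \<alpha>" and aL: "L * \<alpha>^2 \<le> \<alpha>"
  shows "F (x - \<alpha> *\<^sub>R (G x + n)) - F x \<le> \<alpha> / 2 * ((norm n)^2 - (norm (G x))^2)"
proof -
  let ?g = "G x"
  have "F (x - \<alpha> *\<^sub>R (?g + n)) \<le> F x + inner ?g (- (\<alpha> *\<^sub>R (?g + n))) + L / 2 * (norm (- (\<alpha> *\<^sub>R (?g + n))))^2"
    using descent[OF gd lip, of "x - \<alpha> *\<^sub>R (?g + n)" x] by simp
  also have "(norm (- (\<alpha> *\<^sub>R (?g + n))))^2 = \<alpha>^2 * (norm (?g + n))^2"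
    using a0 by (simp add: power_mult_distrib)
  also have "L / 2 * (\<alpha>^2 * (norm (?g + n))^2) \<le> \<alpha> / 2 * (norm (?g + n))^2"
    using aL by (simp add: mult.assoc[symmetric] mult_right_mono)
  finally have "F (x - \<alpha> *\<^sub>R (?g + n)) \<le> F x - \<alpha> * inner ?g (?g + n) + \<alpha> / 2 * (norm (?g + n))^2"
    by simp
  also have "(norm (?g + n))^2 = (norm ?g)^2 + 2 * inner ?g n + (norm n)^2"
    by (simp add: power2_norm_eq_inner inner_add_left inner_add_right inner_commute)
  also have "inner ?g (?g + n) = (norm ?g)^2 + inner ?g n"
    by (simp add: power2_norm_eq_inner inner_add_right)
  finally show ?thesis by (simp add: algebra_simps)
qed

definition vgrad :: "('m::finite \<Rightarrow> real^'n::finite \<Rightarrow> real) \<Rightarrow> real^'n^'m \<Rightarrow> real^'n^'m" where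
  "vgrad f a = (\<chi> i. grad (f i) (a $ i))"

lemma norm2_vec: "(norm (z :: real^'n::finite^'m::finite))^2 = (\<Sum>i\<in>UNIV. (norm (z$i))^2)"
  by (simp add: power2_norm_eq_inner inner_vec_def)

lemma inner_outer: "inner (x::real^'n::finite^'m::finite) y = (\<Sum>i\<in>UNIV. inner (x$i) (y$i))"
  by (rule inner_vec_def)

lemma gderiv_Fsum_comp:
  fixes f :: "'m::finite \<Rightarrow> real^'n::finite \<Rightarrow> real" and S :: "real^'m^'m"
  assumes diff: "\<And>i y. f i differentiable (at y)"
  shows "GDERIV (\<lambda>x. Fsum f (\<theta>0 + kron_id_apply S x)) x :>
           kron_id_apply (transpose S) (vgrad f (\<theta>0 + kron_id_apply S x))"
proof -
  let ?a = "\<theta>0 + kron_id_apply S x"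
  have bl: "bounded_linear (kron_id_apply S :: real^'n^'m \<Rightarrow> _)"
    using kron_linear linear_conv_bounded_linear by blast
  have inner_d: "((\<lambda>x. (\<theta>0 + kron_id_apply S x) $ i) has_derivative (\<lambda>h. kron_id_apply S h $ i)) (at x)" for i
  proof -
    have "((\<lambda>x. \<theta>0 + kron_id_apply S x) has_derivative (\<lambda>h. kron_id_apply S h)) (at x)"
      by (auto intro!: derivative_eq_intros bounded_linear.has_derivative[OF bl])
    then show ?thesis using bounded_linear.has_derivative[OF bounded_linear_vec_nth[of i]] by blast
  qed
  have "((\<lambda>x. \<Sum>i\<in>UNIV. f i ((\<theta>0 + kron_id_apply S x) $ i)) has_derivative
          (\<lambda>h. \<Sum>i\<in>UNIV. inner (kron_id_apply S h $ i) (grad (f i) (?a $ i)))) (at x)"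
    apply (rule has_derivative_sum)
    apply (rule has_derivative_compose[OF inner_d])
    using gderiv_grad[OF diff] unfolding gderiv_def by blast
  moreover have "(\<lambda>h. \<Sum>i\<in>UNIV. inner (kron_id_apply S h $ i) (grad (f i) (?a $ i)))
      = (\<lambda>h. inner h (kron_id_apply (transpose S) (vgrad f ?a)))"
  proof
    fix h :: "real^'n^'m"
    have "(\<Sum>i\<in>UNIV. inner (kron_id_apply S h $ i) (grad (f i) (?a $ i)))
       = inner (kron_id_apply S h) (vgrad f ?a)"
      by (simp only: inner_outer vgrad_def vec_lambda_beta)
    then show "(\<Sum>i\<in>UNIV. inner (kron_id_apply S h $ i) (grad (f i) (?a $ i)))
       = inner h (kron_id_apply (transpose S) (vgrad f ?a))" by (simp add: kron_adjoint)
  qed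
  ultimately show ?thesis unfolding gderiv_def Fsum_def by simp
qed

lemma vgrad_lip:
  fixes f :: "'m::finite \<Rightarrow> real^'n::finite \<Rightarrow> real"
  assumes lip: "\<And>i x y. norm (grad (f i) x - grad (f i) y) \<le> Lg i * norm (x - y)"
    and Lg0: "\<And>i. 0 \<le> Lg i"
  shows "norm (vgrad f a - vgrad f b) \<le> Max (range Lg) * norm (a - b)"
proof -
  let ?MxL = "Max (range Lg)"
  have le: "Lg i \<le> ?MxL" for i by (rule Max_ge) auto
  have MxL0: "0 \<le> ?MxL" using Lg0 le order_trans by blast
  have "(norm (vgrad f a - vgrad f b))^2 = (\<Sum>i\<in>UNIV. (norm (grad (f i) (a$i) - grad (f i) (b$i)))^2)"
    by (simp add: norm2_vec vgrad_def)
  also have "\<dots> \<le> (\<Sum>i\<in>UNIV. (?MxL * norm (a$i - b$i))^2)"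
  proof (rule sum_mono, rule power_mono)
    fix i
    show "norm (grad (f i) (a$i) - grad (f i) (b$i)) \<le> ?MxL * norm (a$i - b$i)"
      using lip[of i "a$i" "b$i"] mult_right_mono[OF le[of i] norm_ge_zero[of "a$i - b$i"]] by linarith
  qed simp
  also have "\<dots> = (?MxL * norm (a - b))^2"
    by (simp add: power_mult_distrib norm2_vec[of "a - b"] sum_distrib_left)
  finally show ?thesis using MxL0 by (simp add: power2_le_iff_abs_le)
qed

lemma grad_comp_lip:
  fixes f :: "'m::finite \<Rightarrow> real^'n::finite \<Rightarrow> real" and S :: "real^'m^'m"
  assumes lip: "\<And>i x y. norm (grad (f i) x - grad (f i) y) \<le> Lg i * norm (x - y)"
    and Lg0: "\<And>i. 0 \<le> Lg i"
  shows "norm (kron_id_apply (transpose S) (vgrad f (\<theta>0 + kron_id_apply S x))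
             - kron_id_apply (transpose S) (vgrad f (\<theta>0 + kron_id_apply S y)))
         \<le> (onorm (\<lambda>v. S *v v))^2 * Max (range Lg) * norm (x - y)"
proof -
  let ?K = "onorm (\<lambda>v. S *v v)" and ?MxL = "Max (range Lg)"
  have K0: "0 \<le> ?K" by (rule onorm_pos_le) simp
  have "norm (kron_id_apply (transpose S) (vgrad f (\<theta>0 + kron_id_apply S x))
             - kron_id_apply (transpose S) (vgrad f (\<theta>0 + kron_id_apply S y)))
        = norm (kron_id_apply (transpose S) (vgrad f (\<theta>0 + kron_id_apply S x) - vgrad f (\<theta>0 + kron_id_apply S y)))"
    by (simp add: kron_diff)
  also have "\<dots> \<le> onorm (\<lambda>v. transpose S *v v) * norm (vgrad f (\<theta>0 + kron_id_apply S x) - vgrad f (\<theta>0 + kron_id_apply S y))"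
    by (rule kron_norm)
  also have "\<dots> \<le> ?K * (?MxL * norm (kron_id_apply S x - kron_id_apply S y))"
    apply (rule mult_mono[OF onorm_transpose_le])
    using vgrad_lip[OF lip Lg0, where a="\<theta>0 + kron_id_apply S x" and b="\<theta>0 + kron_id_apply S y"] K0
    by auto
  also have "\<dots> \<le> ?K * (?MxL * (?K * norm (x - y)))"
  proof -
    have "Lg i \<le> ?MxL" for i by (rule Max_ge) auto
    then have MxL0: "0 \<le> ?MxL" using Lg0 order_trans by blast
    have "norm (kron_id_apply S x - kron_id_apply S y) \<le> ?K * norm (x - y)"
      using kron_norm[of S "x - y"] by (simp add: kron_diff)
    then show ?thesis using K0 MxL0 by (intro mult_left_mono) auto
  qed
  finally show ?thesis by (simp add: power2_eq_square ac_simps)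
qed

lemma gd_telescope:
  fixes F :: "'a::real_inner \<Rightarrow> real"
  assumes gd: "\<And>x. GDERIV F x :> G x"
    and lip: "\<And>x y. norm (G x - G y) \<le> L * norm (x - y)"
    and a0: "0 \<le> \<alpha>" and aL: "L * \<alpha>^2 \<le> \<alpha>"
  shows "F (gd_iter G \<alpha> x0 N \<omega> (t0 + t)) - F (gd_iter G \<alpha> x0 N \<omega> t0)
     \<le> - \<alpha> / 2 * (\<Sum>k<t. (norm (G (gd_iter G \<alpha> x0 N \<omega> (t0 + k))))^2)
       + \<alpha> / 2 * (\<Sum>k<t. (norm (N (t0 + k) \<omega>))^2)"
proof (induction t)
  case 0 then show ?case by simp
next
  case (Suc t)
  let ?x = "gd_iter G \<alpha> x0 N \<omega>"
  have "F (?x (t0 + Suc t)) - F (?x (t0 + t)) \<le> \<alpha> / 2 * ((norm (N (t0 + t) \<omega>))^2 - (norm (G (?x (t0 + t))))^2)"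
    using descent_step[OF gd lip a0 aL, of "?x (t0 + t)" "N (t0 + t) \<omega>"] by simp
  with Suc.IH show ?case by (simp add: algebra_simps)
qed

lemma gd_iter_measurable:
  fixes G :: "'a::euclidean_space \<Rightarrow> 'a"
  assumes G: "G \<in> borel_measurable borel"
    and N: "\<And>k. N k \<in> borel_measurable M"
  shows "(\<lambda>\<omega>. gd_iter G \<alpha> x0 N \<omega> k) \<in> borel_measurable M"
proof (induction k)
  case 0 then show ?case by simp
next
  case (Suc k)
  have Gc: "(\<lambda>\<omega>. G (gd_iter G \<alpha> x0 N \<omega> k)) \<in> borel_measurable M"
    using measurable_compose[OF Suc.IH G] by (simp add: comp_def)
  show ?case using Suc.IH Gc N[of k] by (simp add: borel_measurable_diff borel_measurable_scaleR borel_measurable_add)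
qed

lemma nd_scale:
  assumes "\<sigma> > 0"
  shows "normal_density 0 \<sigma> x * exp (x^2 / (4 * \<sigma>^2)) = normal_density 0 \<sigma> ((1 / sqrt 2) * x)"
proof -
  have sq: "((1 / sqrt 2) * x)^2 = x^2 / 2" by (simp add: power_mult_distrib power_divide)
  have e: "-(x^2) / (2 * \<sigma>^2) + x^2 / (4 * \<sigma>^2) = -(((1 / sqrt 2) * x)^2) / (2 * \<sigma>^2)"
    unfolding sq using assms by (simp add: field_simps)
  have "normal_density 0 \<sigma> x * exp (x^2 / (4 * \<sigma>^2))
      = 1 / sqrt (2 * pi * \<sigma>^2) * (exp (-(x^2) / (2 * \<sigma>^2)) * exp (x^2 / (4 * \<sigma>^2)))"
    by (simp add: normal_density_def)
  also have "exp (-(x^2) / (2 * \<sigma>^2)) * exp (x^2 / (4 * \<sigma>^2)) = exp (-(((1 / sqrt 2) * x)^2) / (2 * \<sigma>^2))"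
    by (simp only: mult_exp_exp e)
  finally show ?thesis by (simp only: normal_density_def diff_zero)
qed

lemma vec_nth2_meas[measurable]: "(\<lambda>x::real^'n::finite^'m::finite. x $ i $ j) \<in> borel_measurable borel"
  by (intro borel_measurable_continuous_onI continuous_intros)

lemma gauss_identity:
  fixes v :: "real^'n::finite^'m::finite"
  assumes "\<sigma> > 0"
  shows "(\<Prod>i\<in>UNIV. \<Prod>j\<in>UNIV. normal_density 0 \<sigma> (v $ i $ j)) * exp ((norm v)^2 / (4 * \<sigma>^2))
     = (\<Prod>i\<in>UNIV. \<Prod>j\<in>UNIV. normal_density 0 \<sigma> (((1 / sqrt 2) *\<^sub>R v) $ i $ j))"
proof -
  have "(norm v)^2 / (4 * \<sigma>^2) = (\<Sum>i\<in>UNIV. \<Sum>j\<in>UNIV. (v$i$j)^2 / (4 * \<sigma>^2))"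
  proof -
    have "(norm v)^2 = (\<Sum>i\<in>UNIV. \<Sum>j\<in>UNIV. (v$i$j)^2)"
      unfolding power2_norm_eq_inner by (simp add: inner_vec_def power2_eq_square)
    then show ?thesis by (simp add: sum_divide_distrib)
  qed
  then have "exp ((norm v)^2 / (4 * \<sigma>^2)) = (\<Prod>i\<in>UNIV. \<Prod>j\<in>UNIV. exp ((v$i$j)^2 / (4 * \<sigma>^2)))"
    by (simp add: exp_sum)
  then show ?thesis
    using nd_scale[OF assms] by (simp add: prod.distrib[symmetric])
qed

lemma gauss_mgf:
  fixes X :: "'w \<Rightarrow> real^'n::finite^'m::finite"
  assumes P: "prob_space M"
    and D: "distributed M lborel X (\<lambda>v. ennreal (\<Prod>i\<in>UNIV. \<Prod>j\<in>UNIV. normal_density 0 \<sigma> (v $ i $ j)))"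
    and \<sigma>: "\<sigma> > 0"
  shows "(\<integral>\<^sup>+\<omega>. ennreal (exp ((norm (X \<omega>))^2 / (4 * \<sigma>^2))) \<partial>M)
           = ennreal (sqrt 2 ^ (CARD('m) * CARD('n)))"
proof -
  define g where "g v = (\<Prod>i\<in>UNIV. \<Prod>j\<in>UNIV. normal_density 0 \<sigma> (v $ i $ j))" for v :: "real^'n^'m"
  have g0: "0 \<le> g v" for v unfolding g_def by (intro prod_nonneg) auto
  have gm[measurable]: "g \<in> borel_measurable borel" unfolding g_def by measurable
  have hm[measurable]: "(\<lambda>v::real^'n^'m. exp ((norm v)^2 / (4 * \<sigma>^2))) \<in> borel_measurable borel"
    by measurable
  have "(\<integral>\<^sup>+\<omega>. ennreal (exp ((norm (X \<omega>))^2 / (4 * \<sigma>^2))) \<partial>M)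
      = (\<integral>\<^sup>+v. ennreal (g v) * ennreal (exp ((norm v)^2 / (4 * \<sigma>^2))) \<partial>lborel)"
    using distributed_nn_integral[OF D[folded g_def], of "\<lambda>v. ennreal (exp ((norm v)^2 / (4 * \<sigma>^2)))"]
    by simp
  also have "\<dots> = (\<integral>\<^sup>+v. ennreal (g ((1 / sqrt 2) *\<^sub>R v)) \<partial>lborel)"
  proof (rule nn_integral_cong)
    fix v :: "real^'n^'m"
    have "ennreal (g v) * ennreal (exp ((norm v)^2 / (4 * \<sigma>^2))) = ennreal (g v * exp ((norm v)^2 / (4 * \<sigma>^2)))"
      using g0[of v] by (simp add: ennreal_mult)
    also have "g v * exp ((norm v)^2 / (4 * \<sigma>^2)) = g ((1 / sqrt 2) *\<^sub>R v)"
      unfolding g_def by (rule gauss_identity[OF \<sigma>])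
    finally show "ennreal (g v) * ennreal (exp ((norm v)^2 / (4 * \<sigma>^2))) = ennreal (g ((1 / sqrt 2) *\<^sub>R v))" .
  qed
  also have "\<dots> = ennreal (sqrt 2 ^ (CARD('m) * CARD('n))) * (\<integral>\<^sup>+u. ennreal (g u) \<partial>lborel)"
  proof -
    have eq: "(lborel :: (real^'n^'m) measure) = density (distr lborel borel (\<lambda>x. 0 + sqrt 2 *\<^sub>R x)) (\<lambda>_. \<bar>sqrt 2\<bar> ^ DIM(real^'n^'m))"
      by (rule lborel_affine) simp
    have "(\<integral>\<^sup>+v. ennreal (g ((1 / sqrt 2) *\<^sub>R v)) \<partial>lborel)
        = (\<integral>\<^sup>+v. ennreal (g ((1 / sqrt 2) *\<^sub>R v)) \<partial>(density (distr lborel borel (\<lambda>x. 0 + sqrt 2 *\<^sub>R x)) (\<lambda>_. \<bar>sqrt 2\<bar> ^ DIM(real^'n^'m))))"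
      using arg_cong[of _ _ "\<lambda>N. integral\<^sup>N N (\<lambda>v. ennreal (g ((1 / sqrt 2) *\<^sub>R v)))", OF eq] .
    also have "\<dots> = (\<integral>\<^sup>+x. ennreal (\<bar>sqrt 2\<bar> ^ DIM(real^'n^'m)) * ennreal (g x) \<partial>lborel)"
      by (simp add: nn_integral_density nn_integral_distr)
    also have "\<dots> = ennreal (sqrt 2 ^ (CARD('m) * CARD('n))) * (\<integral>\<^sup>+u. ennreal (g u) \<partial>lborel)"
      by (simp add: nn_integral_cmult)
    finally show ?thesis .
  qed
  also have "(\<integral>\<^sup>+u. ennreal (g u) \<partial>lborel) = 1"
    using distributed_nn_integral[OF D[folded g_def], of "\<lambda>_. 1"] prob_space.emeasure_space_1[OF P]
    by simp
  finally show ?thesis by simp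
qed

lemma lin_aux:
  fixes a b c e r :: real assumes "e \<le> a" "0 \<le> b" "2 * r \<le> c"
  shows "- (a + b + c) / 2 + e / 2 \<le> - r"
  using assms by (simp add: field_simps)

lemma num_bound:
  fixes D t \<rho> :: real
  assumes D2: "D \<ge> 2" and t0: "t \<ge> 0" and \<rho>1: "\<rho> \<ge> 1"
  shows "exp (- (D * (t + sqrt (t * \<rho>) + \<rho>)) / 2) * sqrt 2 powr (D * t) \<le> exp (- \<rho>)"
proof -
  have b: "sqrt 2 powr (D * t) = exp (D * t * (ln 2 / 2))"
    by (simp add: powr_def ln_sqrt mult_ac)
  have l: "ln 2 < (1::real)" by (rule ln_2_less_1)
  have c1: "D * t * ln 2 \<le> D * t" using l D2 t0 by (simp add: mult_left_le)
  have c2: "0 \<le> D * sqrt (t * \<rho>)" using D2 t0 \<rho>1 by (intro mult_nonneg_nonneg) auto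
  have c3: "2 * \<rho> \<le> D * \<rho>" using D2 \<rho>1 by (simp add: mult_right_mono)
  have e1: "D * (t + sqrt (t * \<rho>) + \<rho>) = D * t + D * sqrt (t * \<rho>) + D * \<rho>" by (simp add: algebra_simps)
  have e2: "D * t * (ln 2 / 2) = (D * t * ln 2) / 2" by simp
  have "- (D * (t + sqrt (t * \<rho>) + \<rho>)) / 2 + D * t * (ln 2 / 2) \<le> - \<rho>"
  proof -
    show ?thesis unfolding e1 e2 by (rule lin_aux[OF c1 c2 c3])
  qed
  then show ?thesis unfolding b mult_exp_exp by simp
qed

lemma chi_tail:
  fixes N :: "nat \<Rightarrow> 'w \<Rightarrow> real^'n::finite^'m::finite"
  assumes P: "prob_space M"
    and indep: "prob_space.indep_vars M (\<lambda>_. borel) N UNIV"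
    and gauss: "\<And>k. distributed M lborel (N k)
                     (\<lambda>v. ennreal (\<Prod>i\<in>UNIV. \<Prod>j\<in>UNIV. normal_density 0 \<sigma> (v $ i $ j)))"
    and \<sigma>: "\<sigma> > 0" and \<rho>1: "\<rho> \<ge> 1" and D2: "CARD('m) * CARD('n) \<ge> 2"
  shows "measure M {\<omega> \<in> space M. (\<Sum>k<t. (norm (N (t0 + k) \<omega>))^2)
            \<le> 2 * real (CARD('m) * CARD('n)) * \<sigma>^2 * (real t + sqrt (real t * \<rho>) + \<rho>)}
         \<ge> 1 - exp (- \<rho>)"
proof -
  interpret prob_space M by (rule P)
  define D where "D = CARD('m) * CARD('n)"
  define a where "a = 2 * real D * \<sigma>^2 * (real t + sqrt (real t * \<rho>) + \<rho>)"
  define Y where "Y \<omega> = (\<Sum>k<t. (norm (N (t0 + k) \<omega>))^2)" for \<omega>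
  define X where "X k \<omega> = ennreal (exp ((norm (N k \<omega>))^2 / (4 * \<sigma>^2)))" for k \<omega>
  define I where "I = (\<lambda>k. t0 + k) ` {..<t}"
  have Nm[measurable]: "N k \<in> borel_measurable M" for k
    using distributed_measurable[OF gauss[of k]] by simp
  have Ym[measurable]: "Y \<in> borel_measurable M" unfolding Y_def by measurable
  have injI: "inj_on (\<lambda>k. t0 + k) {..<t}" by (simp add: inj_on_def)
  have cardI: "card I = t" unfolding I_def using card_image[OF injI] by simp
  have finI: "finite I" unfolding I_def by simp
  have indX: "indep_vars (\<lambda>_. borel) X UNIV"
    unfolding X_def
    by (rule indep_vars_compose2[OF indep, where Y="\<lambda>k v. ennreal (exp ((norm v)^2 / (4 * \<sigma>^2)))"]) measurable
  have indXI: "indep_vars (\<lambda>_. borel) X I" by (rule indep_vars_subset[OF indX]) simp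
  have mgf: "(\<integral>\<^sup>+\<omega>. X k \<omega> \<partial>M) = ennreal (sqrt 2 ^ D)" for k
    unfolding X_def D_def by (rule gauss_mgf[OF P gauss \<sigma>])
  have "(\<integral>\<^sup>+\<omega>. (\<Prod>k\<in>I. X k \<omega>) \<partial>M) = (\<Prod>k\<in>I. \<integral>\<^sup>+\<omega>. X k \<omega> \<partial>M)"
    by (rule indep_vars_nn_integral[OF finI indXI]) simp
  also have "\<dots> = ennreal (sqrt 2 ^ D) ^ t" by (simp add: mgf cardI)
  finally have E: "(\<integral>\<^sup>+\<omega>. (\<Prod>k\<in>I. X k \<omega>) \<partial>M) = ennreal (sqrt 2 ^ (D * t))"
    by (simp add: ennreal_power power_mult)
  have XY: "ennreal (exp (1 / (4 * \<sigma>^2) * Y \<omega>)) = (\<Prod>k\<in>I. X k \<omega>)" for \<omega>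
  proof -
    have "1 / (4 * \<sigma>^2) * Y \<omega> = (\<Sum>k<t. (norm (N (t0 + k) \<omega>))^2 / (4 * \<sigma>^2))"
      unfolding Y_def by (simp add: sum_divide_distrib)
    then show ?thesis unfolding I_def X_def by (simp add: exp_sum prod.reindex[OF injI] prod_ennreal)
  qed
  have s0: "1 / (4 * \<sigma>^2) > 0" using \<sigma> by simp
  have "emeasure M {\<omega> \<in> space M. Y \<omega> \<ge> a}
     \<le> ennreal (exp (- (1 / (4 * \<sigma>^2)) * a)) * (\<integral>\<^sup>+\<omega>. ennreal (exp (1 / (4 * \<sigma>^2) * Y \<omega>)) * indicator (space M) \<omega> \<partial>M)"
    by (rule Chernoff_ineq_nn_integral_ge[OF s0]) simp_all
  also have "(\<integral>\<^sup>+\<omega>. ennreal (exp (1 / (4 * \<sigma>^2) * Y \<omega>)) * indicator (space M) \<omega> \<partial>M)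
      = (\<integral>\<^sup>+\<omega>. (\<Prod>k\<in>I. X k \<omega>) \<partial>M)"
    by (rule nn_integral_cong) (simp add: XY[symmetric])
  also note E
  finally have "emeasure M {\<omega> \<in> space M. Y \<omega> \<ge> a} \<le> ennreal (exp (- (1 / (4 * \<sigma>^2)) * a) * sqrt 2 ^ (D * t))"
    by (simp add: ennreal_mult)
  also have "ennreal (exp (- (1 / (4 * \<sigma>^2)) * a) * sqrt 2 ^ (D * t)) \<le> ennreal (exp (- \<rho>))"
  proof (rule ennreal_leI)
    have p: "sqrt 2 ^ (D * t) = sqrt 2 powr (real D * real t)"
      by (simp add: powr_realpow[symmetric])
    have q: "- (1 / (4 * \<sigma>^2)) * a = - (real D * (real t + sqrt (real t * \<rho>) + \<rho>)) / 2"
      unfolding a_def using \<sigma> by (simp add: field_simps)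
    have "real D \<ge> 2" using D2 unfolding D_def by linarith
    then show "exp (- (1 / (4 * \<sigma>^2)) * a) * sqrt 2 ^ (D * t) \<le> exp (- \<rho>)" unfolding p q using num_bound[of "real D" "real t" \<rho>] \<rho>1 by simp
  qed
  finally have tail: "prob {\<omega> \<in> space M. Y \<omega> \<ge> a} \<le> exp (- \<rho>)"
    by (simp add: emeasure_eq_measure)
  have ev: "{\<omega> \<in> space M. Y \<omega> \<ge> a} \<in> events" by measurable
  have "1 - exp (- \<rho>) \<le> prob (space M - {\<omega> \<in> space M. Y \<omega> \<ge> a})"
    using tail prob_compl[OF ev] by simp
  also have "\<dots> \<le> prob {\<omega> \<in> space M. Y \<omega> \<le> a}"
    by (rule finite_measure_mono) (auto, measurable)
  finally show ?thesis unfolding Y_def a_def D_def .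
qed

theorem lemma2:
  fixes f :: "'m::finite \<Rightarrow> real^'n::finite \<Rightarrow> real"
    and E :: "'m \<Rightarrow> 'm \<Rightarrow> bool"
    and Lg LH :: "'m \<Rightarrow> real"
    and M :: "'w measure"
    and N :: "nat \<Rightarrow> 'w \<Rightarrow> real^'n^'m"
    and \<sigma> \<rho> :: real
    and \<theta>0 x0 :: "real^'n^'m"
    and t0 t :: nat
  assumes m2: "CARD('m) \<ge> 2"
    and E_sym: "\<And>i j. E i j \<longleftrightarrow> E j i"
    and E_irrefl: "\<And>i. \<not> E i i"
    and smooth: "\<And>i. smooth_fun (f i)"
    and grad_lip: "\<And>i x y. norm (grad (f i) x - grad (f i) y) \<le> Lg i * norm (x - y)"
    and hess_lip: "\<And>i x y. onorm (\<lambda>h. frechet_derivative (grad (f i)) (at x) h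
                                     - frechet_derivative (grad (f i)) (at y) h)
                           \<le> LH i * norm (x - y)"
    and P: "prob_space M"
    and N_indep: "prob_space.indep_vars M (\<lambda>_. borel) N UNIV"
    and N_gauss: "\<And>k. distributed M lborel (N k)
                     (\<lambda>v. ennreal (\<Prod>i\<in>UNIV. \<Prod>j\<in>UNIV. normal_density 0 \<sigma> (v $ i $ j)))"
    and \<sigma>_pos: "\<sigma> > 0"
    and \<rho>_ge: "\<rho> \<ge> 1"
  shows
    "let S = psd_sqrt (laplacian E);
         LgPsi = (onorm (\<lambda>v. S *v v))^2 * Max (range Lg);
         LHPsi = (onorm (\<lambda>v. S *v v))^3 * Max (range LH);
         \<alpha> = 1 / (LgPsi * \<rho>^7);
         d = \<sigma> / (20 * LHPsi * \<rho>^2);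
         \<Psi> = Psi f E \<theta>0;
         x = gd_iter (grad \<Psi>) \<alpha> x0 N
     in measure M {\<omega> \<in> space M.
          \<Psi> (x \<omega> (t0 + t)) - \<Psi> (x \<omega> t0)
            \<le> - \<alpha> / 2 * (\<Sum>k<t. (norm (grad \<Psi> (x \<omega> (t0 + k))))^2)
              + real (CARD('m) * CARD('n)) * \<alpha> * \<sigma>^2 * (real t + sqrt (real t * \<rho>) + \<rho>)}
        \<ge> 1 - 2 * exp (- \<rho>)"
proof -
  interpret prob_space M by (rule P)
  define S where "S = psd_sqrt (laplacian E)"
  define MaxL where "MaxL = Max (range Lg)"
  define LgPsi where "LgPsi = (onorm (\<lambda>v. S *v v))^2 * MaxL"
  define \<alpha> where "\<alpha> = 1 / (LgPsi * \<rho>^7)"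
  define \<Psi> where "\<Psi> = Psi f E \<theta>0"
  define G where "G x = kron_id_apply (transpose S) (vgrad f (\<theta>0 + kron_id_apply S x))" for x
  define D where "D = CARD('m) * CARD('n)"
  have diff: "f i differentiable (at y)" for i y
  proof -
    have "iter_dd [] (f i) differentiable (at y)" using smooth[of i] unfolding smooth_fun_def by blast
    then show ?thesis by simp
  qed
  have \<Psi>eq: "\<Psi> = (\<lambda>x. Fsum f (\<theta>0 + kron_id_apply S x))"
    by (simp add: \<Psi>_def Psi_def S_def fun_eq_iff)
  have gd: "GDERIV \<Psi> x :> G x" for x
    unfolding \<Psi>eq G_def by (rule gderiv_Fsum_comp[OF diff])
  have gradeq: "grad \<Psi> = G" by (rule ext, rule grad_unique[OF gd])
  obtain v :: "real^'n" where v: "norm v = 1" using vector_choose_size[of 1] by auto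
  have Lg0: "0 \<le> Lg i" for i
  proof -
    have "0 \<le> Lg i * norm (0 - v)" using grad_lip[of i 0 v] norm_ge_zero order_trans by blast
    then show ?thesis using v by simp
  qed
  have MaxL0: "0 \<le> MaxL"
  proof -
    have "Lg undefined \<le> MaxL" unfolding MaxL_def by (rule Max_ge) auto
    then show ?thesis using Lg0[of undefined] by linarith
  qed
  have LgPsi0: "0 \<le> LgPsi" unfolding LgPsi_def using MaxL0 by simp
  have lip: "norm (G x - G y) \<le> LgPsi * norm (x - y)" for x y
    unfolding G_def LgPsi_def MaxL_def by (rule grad_comp_lip[OF grad_lip Lg0])
  have a0: "0 \<le> \<alpha>" unfolding \<alpha>_def using LgPsi0 \<rho>_ge by simp
  have aL: "LgPsi * \<alpha>^2 \<le> \<alpha>"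
  proof (cases "LgPsi = 0")
    case True then show ?thesis using a0 by simp
  next
    case False
    then have "LgPsi * \<alpha>^2 = \<alpha> * (1 / \<rho>^7)" unfolding \<alpha>_def by (simp add: power2_eq_square)
    also have "\<dots> \<le> \<alpha> * 1"
    proof (rule mult_left_mono[OF _ a0])
      have "1 \<le> \<rho>^7" using \<rho>_ge by (rule one_le_power)
      moreover have pos: "0 < \<rho>^7" using \<rho>_ge by simp
      ultimately show "1 / \<rho>^7 \<le> 1" by (simp only: divide_le_eq_1_pos[OF pos])
    qed
    finally show ?thesis by simp
  qed
  have \<Psi>c: "continuous_on UNIV \<Psi>"
    using gd unfolding gderiv_def by (intro continuous_at_imp_continuous_on ballI has_derivative_continuous) blast
  have Gc: "continuous_on UNIV G"
    by (rule lipschitz_on_continuous_on[of LgPsi], rule lipschitz_onI) (simp_all add: dist_norm lip LgPsi0)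
  have \<Psi>m[measurable]: "\<Psi> \<in> borel_measurable borel" by (rule borel_measurable_continuous_onI[OF \<Psi>c])
  have Gm[measurable]: "G \<in> borel_measurable borel" by (rule borel_measurable_continuous_onI[OF Gc])
  have Nm: "N k \<in> borel_measurable M" for k
    using distributed_measurable[OF N_gauss[of k]] by simp
  have xm[measurable]: "(\<lambda>\<omega>. gd_iter G \<alpha> x0 N \<omega> k) \<in> borel_measurable M" for k
    by (rule gd_iter_measurable[OF Gm Nm])
  define a where "a = 2 * real D * \<sigma>^2 * (real t + sqrt (real t * \<rho>) + \<rho>)"
  define A where "A = {\<omega> \<in> space M.
          \<Psi> (gd_iter G \<alpha> x0 N \<omega> (t0 + t)) - \<Psi> (gd_iter G \<alpha> x0 N \<omega> t0)
            \<le> - \<alpha> / 2 * (\<Sum>k<t. (norm (G (gd_iter G \<alpha> x0 N \<omega> (t0 + k))))^2)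
              + real (CARD('m) * CARD('n)) * \<alpha> * \<sigma>^2 * (real t + sqrt (real t * \<rho>) + \<rho>)}"
  define B where "B = {\<omega> \<in> space M. (\<Sum>k<t. (norm (N (t0 + k) \<omega>))^2) \<le> a}"
  have BA: "B \<subseteq> A"
  proof
    fix \<omega> assume "\<omega> \<in> B"
    then have \<omega>: "\<omega> \<in> space M" and Y: "(\<Sum>k<t. (norm (N (t0 + k) \<omega>))^2) \<le> a" unfolding B_def by auto
    have "\<alpha> / 2 * (\<Sum>k<t. (norm (N (t0 + k) \<omega>))^2) \<le> \<alpha> / 2 * a"
      using Y a0 by (intro mult_left_mono) auto
    also have "\<alpha> / 2 * a = real (CARD('m) * CARD('n)) * \<alpha> * \<sigma>^2 * (real t + sqrt (real t * \<rho>) + \<rho>)"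
      unfolding a_def D_def by simp
    finally show "\<omega> \<in> A" unfolding A_def
      using \<omega> gd_telescope[OF gd lip a0 aL, of x0 N \<omega> t0 t] by simp
  qed
  have Aev: "A \<in> events"
  proof -
    let ?x = "\<lambda>k \<omega>. gd_iter G \<alpha> x0 N \<omega> k"
    have c1: "(\<lambda>\<omega>. \<Psi> (?x k \<omega>)) \<in> borel_measurable M" for k
      using measurable_compose[OF xm[of k] \<Psi>m] by (simp add: comp_def)
    have c2: "(\<lambda>\<omega>. G (?x k \<omega>)) \<in> borel_measurable M" for k
      using measurable_compose[OF xm[of k] Gm] by (simp add: comp_def)
    have f: "(\<lambda>\<omega>. \<Psi> (?x (t0 + t) \<omega>) - \<Psi> (?x t0 \<omega>)) \<in> borel_measurable M"
      by (rule borel_measurable_diff[OF c1 c1])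
    have s: "(\<lambda>\<omega>. \<Sum>k<t. (norm (G (?x (t0 + k) \<omega>)))^2) \<in> borel_measurable M"
    proof -
      have nm: "(norm :: real^'n^'m \<Rightarrow> real) \<in> borel_measurable borel"
        by (rule borel_measurable_continuous_onI[OF continuous_on_norm_id])
      have c3: "(\<lambda>\<omega>. norm (G (?x k \<omega>))) \<in> borel_measurable M" for k
        using measurable_compose[OF c2[of k] nm] by (simp add: comp_def)
      show ?thesis by (intro borel_measurable_sum borel_measurable_power c3)
    qed
    have g: "(\<lambda>\<omega>. - \<alpha> / 2 * (\<Sum>k<t. (norm (G (?x (t0 + k) \<omega>)))^2)
              + real (CARD('m) * CARD('n)) * \<alpha> * \<sigma>^2 * (real t + sqrt (real t * \<rho>) + \<rho>)) \<in> borel_measurable M"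
      by (intro borel_measurable_add borel_measurable_times borel_measurable_const s)
    show ?thesis unfolding A_def by (rule borel_measurable_le[OF f g])
  qed
  have Dn: "0 < CARD('n)" by (rule finite_UNIV_card_ge_0) simp
  have D2: "2 \<le> CARD('m) * CARD('n)"
  proof -
    have "CARD('m) * 1 \<le> CARD('m) * CARD('n)" using Dn by (intro mult_le_mono2) simp
    then have "CARD('m) \<le> CARD('m) * CARD('n)" by (simp only: mult_1_right)
    then show ?thesis using m2 by (rule order_trans[rotated])
  qed
  have "1 - 2 * exp (- \<rho>) \<le> 1 - exp (- \<rho>)" by simp
  also have "1 - exp (- \<rho>) \<le> prob B"
    unfolding B_def a_def D_def
    by (rule chi_tail[OF P N_indep N_gauss \<sigma>_pos \<rho>_ge]) (rule D2)
  also have "prob B \<le> prob A" by (rule finite_measure_mono[OF BA Aev])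
  finally have "1 - 2 * exp (- \<rho>) \<le> prob A" .
  then show ?thesis
    unfolding Let_def S_def[symmetric] MaxL_def[symmetric] LgPsi_def[symmetric] \<alpha>_def[symmetric]
      \<Psi>_def[symmetric] gradeq A_def by simp
qed

end
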